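(* Let $\beta_0>0$, $M>0$, and let $(f_n)_{n\ge0}$ be a pointwise converging sequence of increasing differentiable functions $f_n:[0,\beta_0]\to[0,M]$ such that for all $n\ge1$, $$f_n'\ \ge\ \frac{n}{\Sigma_n}\,f_n,\qquad\text{where } \Sigma_n=\sum_{k=0}^{n-1}f_k .$$ Then there exists $\beta_1\in[0,\beta_0]$ such that: (P1) for every $\beta<\beta_1$ there exists $c_\beta>0$ such that $f_n(\beta)\le\exp(-c_\beta n)$ for all $n$ large enough; (P2) for every $\beta>\beta_1$ (with $\beta\le\beta_0$), the limit $f=\lim_{n\to\infty}f_n$ satisfies $f(\beta)\ge\beta-\beta_1$.
   Context: The differential inequality is assumed to hold pointwise on $[0,\beta_0]$ (in particular $\Sigma_n>0$ wherever it is used). *)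

theory Defs
  imports "HOL-Analysis.Analysis"
begin

end

theory Submission
  imports Defs "HOL-Analysis.Analysis" "HOL-Real_Asymp.Real_Asymp"
begin

lemma mono_deriv:
  fixes h h' :: "real \<Rightarrow> real"
  assumes ab: "a \<le> b"
    and d: "\<And>x. x \<in> {a..b} \<Longrightarrow> (h has_real_derivative h' x) (at x within {a..b})"
    and nn: "\<And>x. x \<in> {a..b} \<Longrightarrow> h' x \<ge> 0"
  shows "h a \<le> h b"
proof (rule DERIV_nonneg_imp_increasing_open[OF ab])
  fix x assume x: "a < x" "x < b"
  then have "(h has_real_derivative h' x) (at x)"
    using d[of x] at_within_Icc_at[OF x] by auto
  then show "\<exists>y. (h has_real_derivative y) (at x) \<and> 0 \<le> y" using nn[of x] x by auto
next
  show "continuous_on {a..b} h" by (rule DERIV_continuous_on[OF d])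
qed

lemma grow:
  fixes g g' :: "real \<Rightarrow> real"
  assumes ab: "a \<le> b" and sub: "{a..b} \<subseteq> T"
    and d: "\<And>x. x \<in> {a..b} \<Longrightarrow> (g has_real_derivative g' x) (at x within T)"
    and ineq: "\<And>x. x \<in> {a..b} \<Longrightarrow> g' x \<ge> c * g x"
  shows "g a * exp (c * (b - a)) \<le> g b"
proof -
  have "g a * exp (-c*a) \<le> g b * exp (-c*b)"
  proof (rule mono_deriv[where h'="\<lambda>x. g' x * exp (-c*x) + g x * (exp (-c*x) * (-c))", OF ab])
    fix x assume x: "x \<in> {a..b}"
    have "(g has_real_derivative g' x) (at x within {a..b})"
      using DERIV_subset[OF d[OF x] sub] .
    then show "((\<lambda>x. g x * exp (-c*x)) has_real_derivative g' x * exp (-c*x) + g x * (exp (-c*x) * (-c))) (at x within {a..b})"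
      by (auto intro!: derivative_eq_intros)
    have "g' x * exp (-c*x) + g x * (exp (-c*x) * (-c)) = (g' x - c * g x) * exp (-c*x)"
      by (simp add: algebra_simps)
    also have "\<dots> \<ge> 0" using ineq[OF x] by simp
    finally show "0 \<le> g' x * exp (-c*x) + g x * (exp (-c*x) * (-c))" .
  qed
  then have "g a * exp (-c*a) * exp (c*b) \<le> g b * exp (-c*b) * exp (c*b)"
    by (rule mult_right_mono) simp
  then show ?thesis
    by (simp add: mult.assoc exp_add[symmetric] algebra_simps)
qed

lemma summ_exp:
  fixes d a M :: real
  assumes "d > 0" "a > 0"
  shows "summable (\<lambda>k::nat. M * exp (-d * real k powr a))"
proof -
  have "(\<lambda>k::nat. exp(-d * real k powr a)) \<in> o(\<lambda>k. 1/real k^2)"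
    using assms by real_asymp
  from landau_o.smallD[OF this, of 1] have ev: "eventually (\<lambda>k. norm (exp(-d * real k powr a)) \<le> inverse (real k ^ 2)) sequentially"
    by (simp add: divide_inverse)
  have "summable (\<lambda>k::nat. exp(-d * real k powr a))"
    by (rule summable_comparison_test_ev[OF ev inverse_power_summable]) simp
  then show ?thesis by (rule summable_mult)
qed

lemma harm_le_ln: "n \<ge> 1 \<Longrightarrow> (harm n :: real) \<le> ln (real n) + 1"
proof -
  assume "n \<ge> 1"
  then obtain m where m: "n = Suc m" by (cases n) auto
  have "harm (Suc m) - ln (real (Suc m)) \<le> (harm (Suc 0) :: real) - ln (real (Suc 0))"
    using decseq_harm_diff_ln unfolding decseq_def by (metis le0)
  moreover have "harm 0 = (0::real)" by (simp add: harm_def)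
  ultimately show ?thesis using m by (simp add: harm_Suc)
qed

theorem lemma3p1:
  fixes f f' :: "nat \<Rightarrow> real \<Rightarrow> real" and \<beta>0 M :: real
  assumes beta0_pos: "\<beta>0 > 0" and M_pos: "M > 0"
    and conv: "\<And>x. x \<in> {0..\<beta>0} \<Longrightarrow> convergent (\<lambda>n. f n x)"
    and incr: "\<And>n. mono_on {0..\<beta>0} (f n)"
    and deriv: "\<And>n x. x \<in> {0..\<beta>0} \<Longrightarrow>
                  (f n has_real_derivative f' n x) (at x within {0..\<beta>0})"
    and range: "\<And>n x. x \<in> {0..\<beta>0} \<Longrightarrow> 0 \<le> f n x \<and> f n x \<le> M"
    and Sigma_pos: "\<And>n x. n \<ge> 1 \<Longrightarrow> x \<in> {0..\<beta>0} \<Longrightarrow> (\<Sum>k<n. f k x) > 0"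
    and diffineq: "\<And>n x. n \<ge> 1 \<Longrightarrow> x \<in> {0..\<beta>0} \<Longrightarrow>
                  f' n x \<ge> real n / (\<Sum>k<n. f k x) * f n x"
  shows "\<exists>\<beta>1 \<in> {0..\<beta>0}.
           (\<forall>\<beta>. 0 \<le> \<beta> \<and> \<beta> < \<beta>1 \<longrightarrow>
              (\<exists>c>0. \<forall>\<^sub>F n in sequentially. f n \<beta> \<le> exp (- c * real n))) \<and>
           (\<forall>\<beta>. \<beta>1 < \<beta> \<and> \<beta> \<le> \<beta>0 \<longrightarrow> lim (\<lambda>n. f n \<beta>) \<ge> \<beta> - \<beta>1)"
proof -
  define Sg where "Sg n x = (\<Sum>k<n. f k x)" for n x
  define Sset where "Sset = {x\<in>{0..\<beta>0}. \<forall>\<alpha>>0. \<forall>N. \<exists>n\<ge>N. real n powr (1-\<alpha>) < Sg n x}"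
  define \<beta>1 where "\<beta>1 = (if Sset = {} then \<beta>0 else Inf Sset)"
  have Sset_sub: "Sset \<subseteq> {0..\<beta>0}" unfolding Sset_def by auto
  have bdd: "bdd_below Sset" using Sset_sub by (auto intro!: bdd_belowI[of _ 0])
  have b1: "\<beta>1 \<in> {0..\<beta>0}"
  proof (cases "Sset = {}")
    case True then show ?thesis using beta0_pos by (simp add: \<beta>1_def)
  next
    case False
    then obtain s where s: "s \<in> Sset" by auto
    have "Inf Sset \<le> s" by (rule cInf_lower[OF s bdd])
    moreover have "0 \<le> Inf Sset" using False Sset_sub by (auto intro!: cInf_greatest)
    ultimately show ?thesis using s Sset_sub False by (auto simp: \<beta>1_def)
  qed
  have notS: "x \<notin> Sset" if "x < \<beta>1" for x
  proof
    assume x: "x \<in> Sset"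
    then have "Sset \<noteq> {}" by auto
    with cInf_lower[OF x bdd] that show False by (simp add: \<beta>1_def)
  qed
  have fnn: "0 \<le> f n x" and fM: "f n x \<le> M" if "x \<in> {0..\<beta>0}" for n x
    using range[OF that] by auto
  have Sg_mono: "Sg n x \<le> Sg n y" if "x \<in> {0..\<beta>0}" "y \<in> {0..\<beta>0}" "x \<le> y" for n x y
    unfolding Sg_def by (rule sum_mono) (use that in \<open>auto intro!: mono_onD[OF incr]\<close>)
  have Sg_pos: "Sg n x > 0" if "n \<ge> 1" "x \<in> {0..\<beta>0}" for n x
    using Sigma_pos[OF that] by (simp add: Sg_def)
  have dineq: "f' n x \<ge> real n / Sg n x * f n x" if "n \<ge> 1" "x \<in> {0..\<beta>0}" for n x
    using diffineq[OF that] by (simp add: Sg_def)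

  have P1: "\<exists>c>0. \<forall>\<^sub>F n in sequentially. f n \<beta> \<le> exp (- c * real n)"
    if \<beta>: "0 \<le> \<beta>" "\<beta> < \<beta>1" for \<beta>
  proof -
    define \<delta> where "\<delta> = (\<beta>1 - \<beta>) / 3"
    have \<delta>: "\<delta> > 0" using \<beta> by (simp add: \<delta>_def)
    define \<beta>' where "\<beta>' = \<beta> + \<delta>"
    define \<beta>'' where "\<beta>'' = \<beta> + 2*\<delta>"
    have b''lt: "\<beta>'' < \<beta>1" using \<beta> by (simp add: \<beta>''_def \<delta>_def field_simps)
    have b''in: "\<beta>'' \<in> {0..\<beta>0}" and b'in: "\<beta>' \<in> {0..\<beta>0}" and bin: "\<beta> \<in> {0..\<beta>0}"
      using b''lt b1 \<beta> \<delta> by (auto simp: \<beta>''_def \<beta>'_def)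
    from notS[OF b''lt] b''in obtain \<alpha> N where \<alpha>: "\<alpha> > 0"
      and N: "\<And>n. n \<ge> N \<Longrightarrow> Sg n \<beta>'' \<le> real n powr (1-\<alpha>)"
      unfolding Sset_def by (auto simp: not_less)
    define K where "K = max N 1"
    have dec: "f n \<beta>' \<le> M * exp (-\<delta> * real n powr \<alpha>)" if n: "n \<ge> K" for n
    proof -
      have n1: "n \<ge> 1" "n \<ge> N" using n by (auto simp: K_def)
      have "f n \<beta>' * exp (real n powr \<alpha> * (\<beta>'' - \<beta>')) \<le> f n \<beta>''"
      proof (rule grow[where T="{0..\<beta>0}" and g'="f' n"])
        show "\<beta>' \<le> \<beta>''" using \<delta> by (simp add: \<beta>'_def \<beta>''_def)
        show sub: "{\<beta>'..\<beta>''} \<subseteq> {0..\<beta>0}" using b'in b''in by auto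
        fix x assume x: "x \<in> {\<beta>'..\<beta>''}"
        with sub have xin: "x \<in> {0..\<beta>0}" by auto
        show "(f n has_real_derivative f' n x) (at x within {0..\<beta>0})" by (rule deriv[OF xin])
        have Sx: "0 < Sg n x" "Sg n x \<le> real n powr (1-\<alpha>)"
          using Sg_pos[OF n1(1) xin] Sg_mono[OF xin b''in, of n] x N[OF n1(2)] by auto
        have "real n powr \<alpha> * Sg n x \<le> real n powr \<alpha> * real n powr (1-\<alpha>)"
          using Sx by (intro mult_left_mono) auto
        also have "\<dots> = real n" using n1 by (simp add: powr_add[symmetric])
        finally have "real n powr \<alpha> \<le> real n / Sg n x" using Sx by (simp add: le_divide_eq)
        then have "real n powr \<alpha> * f n x \<le> real n / Sg n x * f n x"
          using fnn[OF xin] by (rule mult_right_mono)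
        also have "\<dots> \<le> f' n x" by (rule dineq[OF n1(1) xin])
        finally show "real n powr \<alpha> * f n x \<le> f' n x" .
      qed
      also have "\<dots> \<le> M" using fM[OF b''in] .
      finally have *: "f n \<beta>' * exp (real n powr \<alpha> * \<delta>) \<le> M"
        by (simp add: \<beta>'_def \<beta>''_def)
      have "f n \<beta>' = f n \<beta>' * exp (real n powr \<alpha> * \<delta>) * exp (-\<delta> * real n powr \<alpha>)"
        by (simp add: mult.assoc exp_add[symmetric])
      also have "\<dots> \<le> M * exp (-\<delta> * real n powr \<alpha>)"
        using * by (rule mult_right_mono) simp
      finally show ?thesis .
    qed
    define g where "g k = M * exp (-\<delta> * real k powr \<alpha>)" for k
    have summ: "summable g" unfolding g_def by (rule summ_exp[OF \<delta> \<alpha>])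
    define C where "C = M * real K + suminf g"
    have gnn: "0 \<le> g k" for k using M_pos by (simp add: g_def)
    have C: "C > 0"
    proof -
      have "real K \<ge> 1" by (simp add: K_def)
      then have "M * real K > 0" using M_pos by simp
      then show ?thesis using suminf_nonneg[OF summ gnn] by (simp add: C_def)
    qed
    have Sg_b': "Sg n \<beta>' \<le> C" for n
    proof -
      have "Sg n \<beta>' \<le> (\<Sum>k<n. (if k < K then M else 0) + g k)"
        unfolding Sg_def
      proof (rule sum_mono)
        fix k assume "k \<in> {..<n}"
        show "f k \<beta>' \<le> (if k < K then M else 0) + g k"
          using fM[OF b'in, of k] dec[of k] gnn[of k] by (auto simp: g_def)
      qed
      also have "\<dots> = (\<Sum>k<n. if k < K then M else 0) + (\<Sum>k<n. g k)"
        by (simp add: sum.distrib)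
      also have "(\<Sum>k<n. if k < K then M else 0) = (\<Sum>k\<in>{..<n} \<inter> {..<K}. M)"
        by (subst sum.inter_restrict) auto
      also have "(\<Sum>k\<in>{..<n} \<inter> {..<K}. M) \<le> M * real K"
      proof -
        have "card ({..<n} \<inter> {..<K}) \<le> card {..<K}" by (rule card_mono) auto
        then show ?thesis using M_pos by simp
      qed
      also have "(\<Sum>k<n. g k) \<le> suminf g"
        by (rule sum_le_suminf[OF summ]) (auto simp: gnn)
      finally show ?thesis by (simp add: C_def)
    qed
    have dec2: "f n \<beta> \<le> M * exp (-(\<delta>/C) * real n)" if n1: "n \<ge> 1" for n
    proof -
      have "f n \<beta> * exp (real n / C * (\<beta>' - \<beta>)) \<le> f n \<beta>'"
      proof (rule grow[where T="{0..\<beta>0}" and g'="f' n"])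
        show "\<beta> \<le> \<beta>'" using \<delta> by (simp add: \<beta>'_def)
        show sub: "{\<beta>..\<beta>'} \<subseteq> {0..\<beta>0}" using b'in bin by auto
        fix x assume x: "x \<in> {\<beta>..\<beta>'}"
        with sub have xin: "x \<in> {0..\<beta>0}" by auto
        show "(f n has_real_derivative f' n x) (at x within {0..\<beta>0})" by (rule deriv[OF xin])
        have Sx: "0 < Sg n x" "Sg n x \<le> C"
          using Sg_pos[OF n1 xin] Sg_mono[OF xin b'in, of n] x Sg_b'[of n] by auto
        have "real n / C \<le> real n / Sg n x"
          using Sx by (intro divide_left_mono) auto
        then have "real n / C * f n x \<le> real n / Sg n x * f n x"
          using fnn[OF xin] by (rule mult_right_mono)
        also have "\<dots> \<le> f' n x" by (rule dineq[OF n1 xin])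
        finally show "real n / C * f n x \<le> f' n x" .
      qed
      also have "\<dots> \<le> M" using fM[OF b'in] .
      finally have *: "f n \<beta> * exp ((\<delta>/C) * real n) \<le> M"
        by (simp add: \<beta>'_def mult.commute)
      have "f n \<beta> = f n \<beta> * exp ((\<delta>/C) * real n) * exp (-(\<delta>/C) * real n)"
        by (simp add: mult.assoc exp_add[symmetric])
      also have "\<dots> \<le> M * exp (-(\<delta>/C) * real n)"
        using * by (rule mult_right_mono) simp
      finally show ?thesis .
    qed
    define c where "c = \<delta> / (2*C)"
    have c: "c > 0" using \<delta> C by (simp add: c_def)
    have "\<forall>\<^sub>F n in sequentially. f n \<beta> \<le> exp (- c * real n)"
      using eventually_ge_at_top[of "max 1 (nat \<lceil>ln M / c\<rceil>)"]
    proof eventually_elim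
      case (elim n)
      then have n1: "n \<ge> 1" and "real n \<ge> ln M / c" by linarith+
      then have lnM: "ln M \<le> c * real n" using c by (simp add: pos_divide_le_eq mult.commute)
      have "f n \<beta> \<le> M * exp (-(\<delta>/C) * real n)" by (rule dec2[OF n1])
      also have "\<dots> = exp (ln M + (-(\<delta>/C) * real n))"
        using M_pos by (simp only: exp_add exp_ln)
      also have "\<dots> = exp (ln M - 2 * c * real n)"
        using C by (simp add: c_def)
      also have "\<dots> \<le> exp (- c * real n)" using lnM by simp
      finally show ?case .
    qed
    with c show ?thesis by blast
  qed
  define U where "U n x = (\<Sum>i=1..n. f i x / real i)" for n x
  have Ineq1: "(\<beta> - s) * (ln (Sg (Suc n) s) - ln M) \<le> U n \<beta> - U n s"
    if n1: "n \<ge> 1" and sin: "s \<in> {0..\<beta>0}" and bin: "\<beta> \<in> {0..\<beta>0}" and sb: "s \<le> \<beta>" for n s \<beta>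
  proof -
    define K where "K = ln (Sg (Suc n) s) - ln M"
    have "U n s - K * s \<le> U n \<beta> - K * \<beta>"
    proof (rule mono_deriv[where h="\<lambda>x. U n x - K * x" and h'="\<lambda>x. (\<Sum>i=1..n. f' i x / real i) - K", OF sb])
      fix x assume x: "x \<in> {s..\<beta>}"
      have sub: "{s..\<beta>} \<subseteq> {0..\<beta>0}" using sin bin by auto
      with x have xin: "x \<in> {0..\<beta>0}" by auto
      have di: "((\<lambda>x. f i x / real i) has_real_derivative f' i x / real i) (at x within {s..\<beta>})" for i
        by (rule DERIV_cdivide[OF DERIV_subset[OF deriv[OF xin] sub]])
      have dS: "((\<lambda>x. (\<Sum>i=1..n. f i x / real i)) has_real_derivative (\<Sum>i=1..n. f' i x / real i)) (at x within {s..\<beta>})"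
        by (rule DERIV_sum) (rule di)
      then show "((\<lambda>x. U n x - K * x) has_real_derivative (\<Sum>i=1..n. f' i x / real i) - K) (at x within {s..\<beta>})"
        unfolding U_def[abs_def]
        using DERIV_diff[OF dS, of "\<lambda>x. K * x" K] by (auto intro!: derivative_eq_intros)
      have tm: "ln (Sg (Suc i) x) - ln (Sg i x) \<le> f' i x / real i" if i: "i \<in> {1..n}" for i
      proof -
        have i1: "i \<ge> 1" using i by auto
        have Sp: "Sg i x > 0" by (rule Sg_pos[OF i1 xin])
        have Ss: "Sg (Suc i) x = Sg i x + f i x" by (simp add: Sg_def)
        have Sp2: "Sg (Suc i) x > 0" using Sp fnn[OF xin, of i] Ss by simp
        have "ln (Sg (Suc i) x) - ln (Sg i x) = ln (Sg (Suc i) x / Sg i x)"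
          using Sp Sp2 by (simp add: ln_div)
        also have "\<dots> \<le> Sg (Suc i) x / Sg i x - 1"
          using Sp Sp2 by (intro ln_le_minus_one) simp
        also have "\<dots> = f i x / Sg i x" using Sp Ss by (simp add: field_simps)
        also have "\<dots> = (real i / Sg i x * f i x) / real i" using i1 by simp
        also have "\<dots> \<le> f' i x / real i"
          using dineq[OF i1 xin] i1 by (intro divide_right_mono) auto
        finally show ?thesis .
      qed
      have "ln (Sg (Suc n) x) - ln (Sg 1 x) = (\<Sum>i=1..n. ln (Sg (Suc i) x) - ln (Sg i x))"
        by (subst sum_Suc_diff) auto
      also have "\<dots> \<le> (\<Sum>i=1..n. f' i x / real i)"
        by (rule sum_mono) (rule tm)
      finally have A: "ln (Sg (Suc n) x) - ln (Sg 1 x) \<le> (\<Sum>i=1..n. f' i x / real i)" .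
      have "Sg (Suc n) s \<le> Sg (Suc n) x" using Sg_mono[OF sin xin] x by auto
      then have B: "ln (Sg (Suc n) s) \<le> ln (Sg (Suc n) x)"
        using Sg_pos[of "Suc n" s] sin by simp
      have "Sg 1 x = f 0 x" by (simp add: Sg_def)
      then have C: "ln (Sg 1 x) \<le> ln M"
        using Sg_pos[of 1 x] xin fM[OF xin, of 0] M_pos by simp
      show "0 \<le> (\<Sum>i=1..n. f' i x / real i) - K"
        using A B C by (simp add: K_def)
    qed
    then show ?thesis by (simp add: K_def algebra_simps)
  qed
  have KEY: "\<beta> - s \<le> lim (\<lambda>n. f n \<beta>)"
    if sS: "s \<in> Sset" and sb: "s < \<beta>" and bb: "\<beta> \<le> \<beta>0" for s \<beta>
  proof -
    have sin: "s \<in> {0..\<beta>0}" using sS Sset_sub by auto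
    have bin: "\<beta> \<in> {0..\<beta>0}" using sin sb bb by auto
    define L where "L = lim (\<lambda>n. f n \<beta>)"
    have limf: "(\<lambda>n. f n \<beta>) \<longlonglongrightarrow> L"
      using conv[OF bin] by (simp add: L_def convergent_LIMSEQ_iff)
    have L0: "0 \<le> L" by (rule LIMSEQ_le_const[OF limf]) (use fnn[OF bin] in auto)
    show ?thesis unfolding L_def[symmetric]
    proof (rule field_le_epsilon)
      fix e :: real assume e: "0 < e"
      define \<alpha> where "\<alpha> = e / (2 * (\<beta>0 + 1))"
      have \<alpha>: "\<alpha> > 0" using e beta0_pos by (simp add: \<alpha>_def)
      define D where "D = L + e/2"
      have D: "D > 0" using L0 e by (simp add: D_def)
      obtain N where N: "\<And>i. i \<ge> N \<Longrightarrow> f i \<beta> \<le> D"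
      proof -
        from LIMSEQ_D[OF limf, of "e/2"] e obtain N where "\<forall>n\<ge>N. norm (f n \<beta> - L) < e/2" by auto
        then show ?thesis
        proof (intro that[of N])
          fix i assume "N \<le> i"
          with \<open>\<forall>n\<ge>N. norm (f n \<beta> - L) < e/2\<close> have "\<bar>f i \<beta> - L\<bar> < e/2" by auto
          then show "f i \<beta> \<le> D" unfolding D_def by linarith
        qed
      qed
      have Ineq2: "U n \<beta> \<le> real N * M + D * (ln (real n) + 1)" if n1: "n \<ge> 1" for n
      proof -
        have "U n \<beta> \<le> (\<Sum>i=1..n. (if i < N then M else 0) + D * inverse (real i))"
          unfolding U_def
        proof (rule sum_mono)
          fix i assume i: "i \<in> {1..n}"
          then have i1: "real i \<ge> 1" by auto
          have f0: "0 \<le> f i \<beta>" "f i \<beta> \<le> M" using fnn[OF bin] fM[OF bin] by auto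
          have fi: "f i \<beta> / real i \<le> f i \<beta>" using f0 i1 by (simp add: divide_le_eq mult_le_cancel_left1)
          have Di: "0 \<le> D * inverse (real i)" using D i1 by simp
          show "f i \<beta> / real i \<le> (if i < N then M else 0) + D * inverse (real i)"
          proof (cases "i < N")
            case True then show ?thesis using fi f0 Di by auto
          next
            case False
            then have "f i \<beta> \<le> D" using N by auto
            then have "f i \<beta> / real i \<le> D / real i" using i1 by (intro divide_right_mono) auto
            then show ?thesis using False by (simp add: divide_inverse)
          qed
        qed
        also have "\<dots> = (\<Sum>i=1..n. if i < N then M else 0) + D * harm n"
          by (simp add: sum.distrib sum_distrib_left harm_def)
        also have "(\<Sum>i=1..n. if i < N then M else 0) = (\<Sum>i\<in>{1..n} \<inter> {..<N}. M)"
          by (subst sum.inter_restrict) auto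
        also have "\<dots> \<le> real N * M"
        proof -
          have "card ({1..n} \<inter> {..<N}) \<le> card {..<N}" by (rule card_mono) auto
          then show ?thesis using M_pos by simp
        qed
        also have "D * harm n \<le> D * (ln (real n) + 1)"
          using harm_le_ln[OF n1] D by (intro mult_left_mono) auto
        finally show ?thesis by simp
      qed
      define A where "A = (\<beta> - s) * (1 - \<alpha>)"
      have AD: "A \<le> D"
      proof (rule ccontr)
        assume "\<not> A \<le> D"
        then have AD: "A - D > 0" by simp
        define E where "E = real N * M + D + (\<beta> - s) * ln M"
        from sS \<alpha> obtain m where m: "m \<ge> max 2 (nat \<lceil>exp (E / (A - D))\<rceil> + 1)"
          and mS: "real m powr (1 - \<alpha>) < Sg m s"
          unfolding Sset_def by blast
        then have m2: "m \<ge> 2" by simp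
        then obtain n where mn: "m = Suc n" and n1: "n \<ge> 1" by (cases m) auto
        have mpos: "real m powr (1 - \<alpha>) > 0" using m2 by simp
        have Spos: "0 < Sg m s" using mpos mS by linarith
        have "ln (real m powr (1 - \<alpha>)) < ln (Sg m s)"
          using ln_less_cancel_iff[OF mpos Spos] mS by blast
        then have lnS: "(1 - \<alpha>) * ln (real m) < ln (Sg m s)" by simp
        have "(\<beta> - s) * ((1 - \<alpha>) * ln (real m) - ln M) \<le> (\<beta> - s) * (ln (Sg m s) - ln M)"
          using lnS sb by (intro mult_left_mono) auto
        also have "\<dots> \<le> U n \<beta> - U n s" using Ineq1[OF n1 sin bin] sb mn by simp
        also have "\<dots> \<le> U n \<beta>"
          using fnn[OF sin] by (simp add: U_def sum_nonneg)
        also have "\<dots> \<le> real N * M + D * (ln (real n) + 1)" by (rule Ineq2[OF n1])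
        also have "\<dots> \<le> real N * M + D * (ln (real m) + 1)"
          using D n1 mn by (intro add_left_mono mult_left_mono) auto
        finally have "(A - D) * ln (real m) \<le> E"
          by (simp add: A_def E_def algebra_simps)
        moreover have "exp (E / (A - D)) < real m"
        proof -
          have "exp (E / (A - D)) \<le> real (nat \<lceil>exp (E / (A - D))\<rceil>)" by linarith
          then show ?thesis using m by linarith
        qed
        then have "E / (A - D) < ln (real m)"
        proof -
          have mp: "0 < real m" using m2 by simp
          have "ln (exp (E / (A - D))) < ln (real m)"
            using ln_less_cancel_iff[OF exp_gt_zero mp] \<open>exp (E / (A - D)) < real m\<close> by blast
          then show ?thesis by simp
        qed
        then have "E < (A - D) * ln (real m)" using AD by (simp add: pos_divide_less_eq mult.commute)
        ultimately show False by simp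
      qed
      have "(\<beta> - s) * \<alpha> \<le> (\<beta>0 + 1) * \<alpha>"
        using sin bb \<alpha> by (intro mult_right_mono) auto
      also have "\<dots> = e / 2" using beta0_pos by (simp add: \<alpha>_def field_simps)
      finally have "(\<beta> - s) * \<alpha> \<le> e/2" .
      then show "\<beta> - s \<le> L + e" using AD by (simp add: A_def D_def algebra_simps)
    qed
  qed
  have P2: "lim (\<lambda>n. f n \<beta>) \<ge> \<beta> - \<beta>1" if \<beta>: "\<beta>1 < \<beta>" "\<beta> \<le> \<beta>0" for \<beta>
  proof -
    have ne: "Sset \<noteq> {}" using \<beta> by (auto simp: \<beta>1_def)
    then have b1I: "\<beta>1 = Inf Sset" by (simp add: \<beta>1_def)
    show ?thesis
    proof (rule field_le_epsilon)
      fix e :: real assume e: "0 < e"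
      have "Inf Sset < \<beta>1 + min e (\<beta> - \<beta>1)" using e \<beta> b1I by simp
      then obtain s where s: "s \<in> Sset" "s < \<beta>1 + min e (\<beta> - \<beta>1)"
        using cInf_less_iff[OF ne bdd] by blast
      have "\<beta> - s \<le> lim (\<lambda>n. f n \<beta>)" by (rule KEY[OF s(1)]) (use s(2) \<beta> in auto)
      then show "\<beta> - \<beta>1 \<le> lim (\<lambda>n. f n \<beta>) + e" using s(2) by simp
    qed
  qed
  show ?thesis using b1 P1 P2 by blast
qed
end
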